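(* Let $n\ge 4$. Let $B_1$ and $B_2$ be squares of type B for the EvenQuads-$2^n$ deck, and suppose they have the same repeat pattern up to shuffling rows/columns and reflection along the main diagonal; that is, there is a map $t$ of the set of $16$ positions, which is a composition of a permutation of the rows, a permutation of the columns, and possibly the reflection along the main diagonal, such that for all positions $p,q$ one has $B_1(p)=B_1(q)$ if and only if $B_2(t(p))=B_2(t(q))$. Then the number of legit pairs of $B_1$ equals the number of legit pairs of $B_2$.
   Context: Cards of the EvenQuads-$2^n$ deck are the integers $0,\dots,2^n-1$; four integers form a quad iff their bitwise XOR $\oplus$ is $0$. In this context a square is a $4\times4$ array of such integers (repetitions allowed) in which every row and every column has bitwise XOR $0$. A square of type A is such a square with all entries in $\{0,\dots,15\}$, first row $0,1,2,3$ and first column $0,4,8,12$. A square of type B is such a square with all entries divisible by $16$ (and less than $2^n$), whose first row and first column consist of zeros. A square of type C is such a square with $16$ pairwise distinct entries, first row $0,1,2,3$ and first column $0,4,8,12$. The repeat pattern of a square of type B is the set of pairs of positions in which it has equal entries. Given a square $B$ of type B, a square $A$ of type A is a legit pair of $B$ if the entrywise sum $A+B$ has no repeated entries (then $A+B$ is of type C). *)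

theory Defs
  imports Main
begin

text \<open>A 4x4 array is a function on positions (i,j) with i,j < 4; it is
  extended by 0 outside the 16 positions so that arrays are determined by
  their 16 entries.\<close>

definition positions :: "(nat \<times> nat) set" where
  "positions = {0..<4} \<times> {0..<4}"

definition is_square :: "nat \<Rightarrow> (nat \<times> nat \<Rightarrow> nat) \<Rightarrow> bool" where
  "is_square n S \<longleftrightarrow>
     (\<forall>p. p \<notin> positions \<longrightarrow> S p = 0) \<and>
     (\<forall>p\<in>positions. S p < 2 ^ n) \<and>
     (\<forall>i<4. xor (xor (S (i,0)) (S (i,1))) (xor (S (i,2)) (S (i,3))) = 0) \<and>
     (\<forall>j<4. xor (xor (S (0,j)) (S (1,j))) (xor (S (2,j)) (S (3,j))) = 0)"

definition typeA :: "nat \<Rightarrow> (nat \<times> nat \<Rightarrow> nat) \<Rightarrow> bool" where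
  "typeA n S \<longleftrightarrow> is_square n S \<and>
     (\<forall>p\<in>positions. S p \<le> 15) \<and>
     (\<forall>j<4. S (0,j) = j) \<and> (\<forall>i<4. S (i,0) = 4 * i)"

definition typeB :: "nat \<Rightarrow> (nat \<times> nat \<Rightarrow> nat) \<Rightarrow> bool" where
  "typeB n S \<longleftrightarrow> is_square n S \<and>
     (\<forall>p\<in>positions. 16 dvd S p) \<and>
     (\<forall>j<4. S (0,j) = 0) \<and> (\<forall>i<4. S (i,0) = 0)"

definition legit_pair :: "nat \<Rightarrow> (nat \<times> nat \<Rightarrow> nat) \<Rightarrow> (nat \<times> nat \<Rightarrow> nat) \<Rightarrow> bool" where
  "legit_pair n B A \<longleftrightarrow> typeA n A \<and> inj_on (\<lambda>p. A p + B p) positions"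

definition num_legit_pairs :: "nat \<Rightarrow> (nat \<times> nat \<Rightarrow> nat) \<Rightarrow> nat" where
  "num_legit_pairs n B = card {A. legit_pair n B A}"

text \<open>Map of positions: row permutation sigma, column permutation tau,
  optionally followed by reflection along the main diagonal.  Every composition
  of such operations (in any order) has this form.\<close>
definition pos_map :: "bool \<Rightarrow> (nat \<Rightarrow> nat) \<Rightarrow> (nat \<Rightarrow> nat) \<Rightarrow> nat \<times> nat \<Rightarrow> nat \<times> nat" where
  "pos_map reflect \<sigma> \<tau> p = (if reflect then (\<tau> (snd p), \<sigma> (fst p)) else (\<sigma> (fst p), \<tau> (snd p)))"

end

theory Submission imports Defs begin
unbundle bit_operations_syntax

lemma less16: "(k::nat) < 16 \<Longrightarrow> k \<in> {0,1,2,3,4,5,6,7,8,9,10,11,12,13,14,15}"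
proof -
  assume "k < 16" then have "k \<in> {..<16}" by simp
  then show ?thesis by (simp add: lessThan_nat_numeral lessThan_Suc) (elim disjE; simp)
qed

lemma xor_cancel_left [simp]: "(a::nat) XOR (a XOR b) = b"
  by (simp add: xor.assoc[symmetric])
lemma xor_eq0: "((a::nat) XOR b = 0) = (a = b)"
  by (metis xor_cancel_left xor.right_neutral xor_self_eq)
lemma xor_inj: "((a::nat) XOR b = a XOR c) = (b = c)"
  by (metis xor_cancel_left)

lemma xor_inj_r: "(a::nat) XOR c = b XOR c \<Longrightarrow> a = b"
  by (metis xor_inj xor.commute)

lemma xor_lt16: "(a::nat) < 16 \<Longrightarrow> b < 16 \<Longrightarrow> a XOR b < 16"
proof -
  assume "a < 16" "b < 16"
  then have "take_bit 4 a = a" "take_bit 4 b = b" by (simp_all add: take_bit_nat_eq_self_iff)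
  then have "take_bit 4 (a XOR b) = a XOR b" by simp
  then show ?thesis by (metis take_bit_nat_less_exp power_numeral Num.pow.simps sqr.simps numeral_eq_iff) 
qed

definition lin :: "nat \<Rightarrow> nat \<Rightarrow> nat \<Rightarrow> nat \<Rightarrow> nat \<Rightarrow> nat" where
  "lin u1 u2 v1 v2 k = (if bit k 0 then u1 else 0) XOR (if bit k 1 then u2 else 0) XOR
     (if bit k 2 then v1 else 0) XOR (if bit k 3 then v2 else 0)"

lemma ifx: "(if (P::bool) \<noteq> Q then u else (0::nat)) = (if P then u else 0) XOR (if Q then u else 0)"
  by simp

lemma lin_xor: "lin u1 u2 v1 v2 (a XOR b) = lin u1 u2 v1 v2 a XOR lin u1 u2 v1 v2 b"
  unfolding lin_def bit_xor_iff ifx by (simp add: ac_simps)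

lemma lin_0 [simp]: "lin u1 u2 v1 v2 0 = 0"
  by (simp add: lin_def)

lemma lin_lt: "u1 < 16 \<Longrightarrow> u2 < 16 \<Longrightarrow> v1 < 16 \<Longrightarrow> v2 < 16 \<Longrightarrow> lin u1 u2 v1 v2 k < 16"
  unfolding lin_def by (intro xor_lt16; simp)

lemma lin_vals:
  "lin u1 u2 v1 v2 1 = u1" "lin u1 u2 v1 v2 2 = u2" "lin u1 u2 v1 v2 3 = u1 XOR u2"
  "lin u1 u2 v1 v2 4 = v1" "lin u1 u2 v1 v2 8 = v2" "lin u1 u2 v1 v2 12 = v1 XOR v2"
  by (simp_all add: lin_def bit_0)

definition indep :: "nat \<Rightarrow> nat \<Rightarrow> nat \<Rightarrow> nat \<Rightarrow> bool" where
  "indep u1 u2 v1 v2 \<longleftrightarrow> (\<forall>k<16. lin u1 u2 v1 v2 k = 0 \<longrightarrow> k = 0)"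

lemma lin_inj:
  assumes "indep u1 u2 v1 v2" "a < 16" "b < 16" "lin u1 u2 v1 v2 a = lin u1 u2 v1 v2 b"
  shows "a = b"
proof -
  have "lin u1 u2 v1 v2 (a XOR b) = 0" using assms(4) by (simp add: lin_xor xor_eq0)
  moreover have "a XOR b < 16" using assms(2,3) by (rule xor_lt16)
  ultimately have "a XOR b = 0" using assms(1) unfolding indep_def by blast
  then show ?thesis by (simp add: xor_eq0)
qed

type_synonym params = "nat \<times> nat \<times> nat \<times> nat \<times> nat"

definition psi :: "params \<Rightarrow> nat \<Rightarrow> nat" where
  "psi pr k = (case pr of (c,u1,u2,v1,v2) \<Rightarrow> c XOR lin u1 u2 v1 v2 k)"

definition Pset :: "params set" where
  "Pset = {(c,u1,u2,v1,v2). c < 16 \<and> u1 < 16 \<and> u2 < 16 \<and> v1 < 16 \<and> v2 < 16 \<and> indep u1 u2 v1 v2}"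

lemma psi_quad:
  "xor (xor (psi (c,u1,u2,v1,v2) a) (psi (c,u1,u2,v1,v2) b)) (xor (psi (c,u1,u2,v1,v2) d) (psi (c,u1,u2,v1,v2) e))
    = lin u1 u2 v1 v2 (xor (xor a b) (xor d e))"
  by (simp add: psi_def lin_xor ac_simps)

lemma quad_last: "(a::nat) XOR b XOR c XOR d = 0 \<Longrightarrow> d = a XOR b XOR c"
  by (metis xor_eq0 xor.assoc)

lemma s23: "Suc (Suc 0) = 2" "Suc (Suc (Suc 0)) = 3" by simp_all

definition cross :: "(nat \<times> nat) set" where
  "cross = ({0} \<times> {0..<4}) \<union> ({0..<4} \<times> {0})"

lemma lin_RS:
  assumes "R 0 = 0" "R 1 = u1" "R 2 = u2" "R 3 = u1 XOR u2"
    "S 0 = 0" "S 1 = v1" "S 2 = v2" "S 3 = v1 XOR v2" "k < 16"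
  shows "lin u1 u2 v1 v2 k = R (k mod 4) XOR S (k div 4)"
proof -
  have r: "R (Suc 0) = u1" "R (Suc (Suc 0)) = u2" "R (Suc (Suc (Suc 0))) = u1 XOR u2"
     "S (Suc 0) = v1" "S (Suc (Suc 0)) = v2" "S (Suc (Suc (Suc 0))) = v1 XOR v2"
    using assms by (simp_all add: numeral_2_eq_2 numeral_3_eq_3)
  show ?thesis
  using less16[OF assms(9)] by (elim insertE emptyE; simp add: lin_def bit_0 assms(1-8) r ac_simps)
qed

lemma sq_03:
  assumes sq: "is_square 4 X"
  shows "X(0,3) = X(0,0) XOR X(0,1) XOR X(0,2)" "X(3,0) = X(0,0) XOR X(1,0) XOR X(2,0)"
proof -
  have rows: "\<forall>i<4. xor (xor (X(i,0)) (X(i,1))) (xor (X(i,2)) (X(i,3))) = 0"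
    and cols: "\<forall>j<4. xor (xor (X(0,j)) (X(1,j))) (xor (X(2,j)) (X(3,j))) = 0" using sq unfolding is_square_def by blast+
  have "X(0,0) XOR X(0,1) XOR X(0,2) XOR X(0,3) = 0" using rows by (auto simp: xor.assoc)
  then show "X(0,3) = X(0,0) XOR X(0,1) XOR X(0,2)" by (rule quad_last)
  have "X(0,0) XOR X(1,0) XOR X(2,0) XOR X(3,0) = 0" using cols by (auto simp: xor.assoc)
  then show "X(3,0) = X(0,0) XOR X(1,0) XOR X(2,0)" by (rule quad_last)
qed

lemma cross_indep:
  assumes sq: "is_square 4 X"
    and inj: "\<forall>p\<in>cross. \<forall>q\<in>cross. X p = X q \<longrightarrow> p = q"
  shows "indep (X(0,1) XOR X(0,0)) (X(0,2) XOR X(0,0)) (X(1,0) XOR X(0,0)) (X(2,0) XOR X(0,0))"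
proof -
  note h = sq_03[OF sq]
  define R where "R j = X(0,j) XOR X(0,0)" for j
  define S where "S i = X(i,0) XOR X(0,0)" for i
  have RS: "R 0 = 0" "R 1 = X(0,1) XOR X(0,0)" "R 2 = X(0,2) XOR X(0,0)" 
    "R 3 = (X(0,1) XOR X(0,0)) XOR (X(0,2) XOR X(0,0))"
    "S 0 = 0" "S 1 = X(1,0) XOR X(0,0)" "S 2 = X(2,0) XOR X(0,0)" 
    "S 3 = (X(1,0) XOR X(0,0)) XOR (X(2,0) XOR X(0,0))"
    unfolding R_def S_def by (simp_all add: h xor.assoc xor.commute xor.left_commute)
  note key = lin_RS[OF RS]
  show ?thesis unfolding indep_def
  proof (intro allI impI)
    fix k :: nat assume k: "k < 16" and z: "lin (X(0,1) XOR X(0,0)) (X(0,2) XOR X(0,0)) (X(1,0) XOR X(0,0)) (X(2,0) XOR X(0,0)) k = 0"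
    then have "R (k mod 4) = S (k div 4)" using key[OF k] by (simp add: xor_eq0)
    then have "X(0, k mod 4) = X(k div 4, 0)" unfolding R_def S_def by (rule xor_inj_r)
    moreover have "(0, k mod 4) \<in> cross" "(k div 4, 0) \<in> cross" using k by (auto simp: cross_def)
    ultimately have "(0, k mod 4) = (k div 4, 0)" using inj by blast
    then have "k mod 4 = 0" "k div 4 = 0" by auto
    then show "k = 0" using div_mult_mod_eq[of k 4] by simp
  qed
qed


definition cmpt :: "(nat \<times> nat \<Rightarrow> nat) \<Rightarrow> (nat \<times> nat \<Rightarrow> nat) \<Rightarrow> bool" where
  "cmpt B X \<longleftrightarrow> (\<forall>p\<in>positions. \<forall>q\<in>positions. B p = B q \<longrightarrow> X p = X q \<longrightarrow> p = q)"

definition normA :: "(nat \<times> nat \<Rightarrow> nat) \<Rightarrow> bool" where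
  "normA X \<longleftrightarrow> (\<forall>j<4. X(0,j) = j) \<and> (\<forall>i<4. X(i,0) = 4*i)"

definition SB :: "(nat \<times> nat \<Rightarrow> nat) \<Rightarrow> (nat \<times> nat \<Rightarrow> nat) set" where
  "SB B = {A. is_square 4 A \<and> normA A \<and> cmpt B A}"

definition CB :: "(nat \<times> nat \<Rightarrow> nat) \<Rightarrow> (nat \<times> nat \<Rightarrow> nat) set" where
  "CB B = {X. is_square 4 X \<and> cmpt B X}"

lemma typeA_iff:
  assumes "4 \<le> n" shows "typeA n A \<longleftrightarrow> is_square 4 A \<and> normA A"
proof -
  have "(2::nat)^4 \<le> 2^n" using assms by (rule power_increasing) simp
  then have h: "(16::nat) \<le> 2^n" by simp
  show ?thesis unfolding typeA_def is_square_def normA_def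
    using h by (auto simp: less_Suc_eq_le[symmetric])
qed

lemma inj_cmpt:
  assumes "\<forall>p\<in>positions. A p < 16" "\<forall>p\<in>positions. (16::nat) dvd B p"
  shows "inj_on (\<lambda>p. A p + B p) positions \<longleftrightarrow> cmpt B A"
proof
  assume "inj_on (\<lambda>p. A p + B p) positions"
  then show "cmpt B A" unfolding cmpt_def inj_on_def by metis
next
  assume c: "cmpt B A"
  show "inj_on (\<lambda>p. A p + B p) positions"
  proof (rule inj_onI)
    fix p q assume p: "p \<in> positions" and q: "q \<in> positions" and e: "A p + B p = A q + B q"
    have "(A p + B p) mod 16 = A p" using assms p by (auto simp: mod_add_right_eq[symmetric])
    moreover have "(A q + B q) mod 16 = A q" using assms q by (auto simp: mod_add_right_eq[symmetric])
    ultimately have "A p = A q" using e by simp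
    then have "B p = B q" using e by simp
    then show "p = q" using c p q \<open>A p = A q\<close> unfolding cmpt_def by blast
  qed
qed

lemma legit_iff:
  assumes "4 \<le> n" "typeB n B" shows "legit_pair n B A \<longleftrightarrow> A \<in> SB B"
proof -
  have dv: "\<forall>p\<in>positions. (16::nat) dvd B p" using assms(2) unfolding typeB_def by blast
  show ?thesis
  proof
    assume l: "legit_pair n B A"
    then have sq: "is_square 4 A" "normA A" using typeA_iff[OF assms(1)] unfolding legit_pair_def by auto
    then have "\<forall>p\<in>positions. A p < 16" unfolding is_square_def by simp
    then have "cmpt B A" using inj_cmpt[OF _ dv] l unfolding legit_pair_def by blast
    then show "A \<in> SB B" using sq unfolding SB_def by blast
  next
    assume a: "A \<in> SB B"
    then have "\<forall>p\<in>positions. A p < 16" unfolding SB_def is_square_def by simp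
    then show "legit_pair n B A" using a inj_cmpt[OF _ dv] typeA_iff[OF assms(1)]
      unfolding legit_pair_def SB_def by blast
  qed
qed


lemma pos_simp [simp]: "(i,j) \<in> positions \<longleftrightarrow> i < 4 \<and> j < 4"
  by (simp add: positions_def)

definition Phi :: "params \<Rightarrow> (nat \<times> nat \<Rightarrow> nat) \<Rightarrow> (nat \<times> nat \<Rightarrow> nat)" where
  "Phi pr A = (\<lambda>p. if p \<in> positions then psi pr (A p) else 0)"

lemma psi_lt: "pr \<in> Pset \<Longrightarrow> psi pr k < 16"
  by (cases pr) (auto simp: Pset_def psi_def intro!: xor_lt16 lin_lt)

lemma psi_inj: "pr \<in> Pset \<Longrightarrow> a < 16 \<Longrightarrow> b < 16 \<Longrightarrow> psi pr a = psi pr b \<Longrightarrow> a = b"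
  by (cases pr) (auto simp: Pset_def psi_def xor_inj intro: lin_inj)

lemma psi_bij: "pr \<in> Pset \<Longrightarrow> bij_betw (psi pr) {..<16} {..<16}"
proof -
  assume pr: "pr \<in> Pset"
  have i: "inj_on (psi pr) {..<16}" using psi_inj[OF pr] by (auto simp: inj_on_def)
  have "psi pr ` {..<16} \<subseteq> {..<16}" using psi_lt[OF pr] by auto
  then have "psi pr ` {..<16} = {..<16}" using i by (simp add: endo_inj_surj)
  then show ?thesis using i by (simp add: bij_betw_def)
qed

lemma psi_vals:
  "psi (c,u1,u2,v1,v2) 0 = c" "psi (c,u1,u2,v1,v2) 1 = c XOR u1" "psi (c,u1,u2,v1,v2) 2 = c XOR u2"
  "psi (c,u1,u2,v1,v2) 3 = c XOR u1 XOR u2"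
  "psi (c,u1,u2,v1,v2) 4 = c XOR v1" "psi (c,u1,u2,v1,v2) 8 = c XOR v2"
  "psi (c,u1,u2,v1,v2) 12 = c XOR v1 XOR v2" "psi (c,u1,u2,v1,v2) (Suc 0) = c XOR u1"
  by (simp_all add: psi_def lin_def bit_0)

lemma sq_rows:
  assumes "is_square 4 X"
  shows "\<And>i. i < 4 \<Longrightarrow> xor (xor (X(i,0)) (X(i,1))) (xor (X(i,2)) (X(i,3))) = 0"
    "\<And>j. j < 4 \<Longrightarrow> xor (xor (X(0,j)) (X(1,j))) (xor (X(2,j)) (X(3,j))) = 0"
    "\<And>p. p \<notin> positions \<Longrightarrow> X p = 0" "\<And>p. p \<in> positions \<Longrightarrow> X p < 16"
  subgoal using assms unfolding is_square_def by blast
  subgoal using assms unfolding is_square_def by blast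
  subgoal using assms unfolding is_square_def by blast
  subgoal using assms unfolding is_square_def by simp
  done

lemma Phi_in:
  assumes pr: "pr \<in> Pset" and A: "A \<in> SB B"
  shows "Phi pr A \<in> CB B"
proof -
  obtain c u1 u2 v1 v2 where pe: "pr = (c,u1,u2,v1,v2)" by (cases pr)
  have sq: "is_square 4 A" and cA: "cmpt B A" using A unfolding SB_def by auto
  note r = sq_rows[OF sq]
  have "is_square 4 (Phi pr A)"
    unfolding is_square_def
  proof (intro conjI allI ballI impI)
    fix p :: "nat \<times> nat" assume "p \<notin> positions" then show "Phi pr A p = 0" by (simp add: Phi_def)
  next
    fix p :: "nat \<times> nat" assume "p \<in> positions" then show "Phi pr A p < 2^4" using psi_lt[OF pr] by (simp add: Phi_def)
  next
    fix i :: nat assume i: "i < 4"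
    show "xor (xor (Phi pr A (i,0)) (Phi pr A (i,1))) (xor (Phi pr A (i,2)) (Phi pr A (i,3))) = 0"
      using i r(1)[OF i] by (simp add: Phi_def pe psi_quad)
  next
    fix j :: nat assume j: "j < 4"
    show "xor (xor (Phi pr A (0,j)) (Phi pr A (1,j))) (xor (Phi pr A (2,j)) (Phi pr A (3,j))) = 0"
      using j r(2)[OF j] by (simp add: Phi_def pe psi_quad)
  qed
  moreover have "cmpt B (Phi pr A)"
    unfolding cmpt_def
  proof (intro ballI impI)
    fix p q assume p: "p \<in> positions" and q: "q \<in> positions" and b: "B p = B q" and e: "Phi pr A p = Phi pr A q"
    then have "A p = A q" using psi_inj[OF pr r(4)[OF p] r(4)[OF q]] by (simp add: Phi_def)
    then show "p = q" using cA p q b unfolding cmpt_def by blast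
  qed
  ultimately show ?thesis unfolding CB_def by blast
qed

lemma Phi_inj: "inj_on (\<lambda>(pr,A). Phi pr A) (Pset \<times> SB B)"
proof (rule inj_onI, clarify)
  fix pr A pr' A' assume pr: "pr \<in> Pset" and A: "A \<in> SB B" and pr': "pr' \<in> Pset" and A': "A' \<in> SB B"
    and e: "Phi pr A = Phi pr' A'"
  obtain c u1 u2 v1 v2 where pe: "pr = (c,u1,u2,v1,v2)" by (cases pr)
  obtain c' u1' u2' v1' v2' where pe': "pr' = (c',u1',u2',v1',v2')" by (cases pr')
  have nA: "A(0,0) = 0" "A(0,1) = 1" "A(0,2) = 2" "A(1,0) = 4" "A(2,0) = 8"
    using A unfolding SB_def normA_def by auto
  have nA': "A'(0,0) = 0" "A'(0,1) = 1" "A'(0,2) = 2" "A'(1,0) = 4" "A'(2,0) = 8"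
    using A' unfolding SB_def normA_def by auto
  have ev: "psi pr (A p) = psi pr' (A' p)" if "p \<in> positions" for p
    using fun_cong[OF e, of p] that by (simp add: Phi_def)
  have "c = c'" using ev[of "(0,0)"] nA nA' by (simp add: pe pe' psi_vals)
  moreover have "u1 = u1'" using ev[of "(0,1)"] nA nA' \<open>c = c'\<close> by (simp add: pe pe' psi_vals xor_inj)
  moreover have "u2 = u2'" using ev[of "(0,2)"] nA nA' \<open>c = c'\<close> by (simp add: pe pe' psi_vals xor_inj)
  moreover have "v1 = v1'" using ev[of "(1,0)"] nA nA' \<open>c = c'\<close> by (simp add: pe pe' psi_vals xor_inj)
  moreover have "v2 = v2'" using ev[of "(2,0)"] nA nA' \<open>c = c'\<close> by (simp add: pe pe' psi_vals xor_inj)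
  ultimately have pp: "pr = pr'" by (simp add: pe pe')
  have sq: "is_square 4 A" "is_square 4 A'" using A A' unfolding SB_def by auto
  have "A = A'"
  proof
    fix p show "A p = A' p"
    proof (cases "p \<in> positions")
      case True
      then show ?thesis using ev[OF True] psi_inj[OF pr sq_rows(4)[OF sq(1) True] sq_rows(4)[OF sq(2) True]] pp by simp
    next
      case False
      then show ?thesis using sq_rows(3)[OF sq(1)] sq_rows(3)[OF sq(2)] by simp
    qed
  qed
  then show "pr = pr' \<and> A = A'" using pp by simp
qed


lemma Phi_onto:
  assumes B: "typeB n B" and X: "X \<in> CB B"
  shows "X \<in> (\<lambda>(pr,A). Phi pr A) ` (Pset \<times> SB B)"
proof -
  have sq: "is_square 4 X" and cX: "cmpt B X" using X unfolding CB_def by auto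
  note r = sq_rows[OF sq]
  define pr where "pr = (X(0,0), X(0,1) XOR X(0,0), X(0,2) XOR X(0,0), X(1,0) XOR X(0,0), X(2,0) XOR X(0,0))"
  have B0: "B p = 0" if "p \<in> cross" for p using B that unfolding typeB_def cross_def by auto
  have crossP: "p \<in> positions" if "p \<in> cross" for p using that unfolding cross_def by auto
  have "\<forall>p\<in>cross. \<forall>q\<in>cross. X p = X q \<longrightarrow> p = q"
  proof (intro ballI impI)
    fix p q assume p: "p \<in> cross" and q: "q \<in> cross" and e: "X p = X q"
    have "B p = B q" using B0[OF p] B0[OF q] by simp
    then show "p = q" using cX crossP[OF p] crossP[OF q] e unfolding cmpt_def by blast
  qed
  then have ind: "indep (X(0,1) XOR X(0,0)) (X(0,2) XOR X(0,0)) (X(1,0) XOR X(0,0)) (X(2,0) XOR X(0,0))"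
    by (rule cross_indep[OF sq])
  have lt: "X(0,0) < 16" "X(0,1) < 16" "X(0,2) < 16" "X(1,0) < 16" "X(2,0) < 16" using r(4) by auto
  have prP: "pr \<in> Pset" unfolding pr_def Pset_def using ind lt by (auto intro!: xor_lt16)
  note bj = psi_bij[OF prP]
  define phi where "phi = inv_into {..<16} (psi pr)"
  define A where "A = (\<lambda>p. if p \<in> positions then phi (X p) else 0)"
  have Xin: "X p \<in> {..<16}" if "p \<in> positions" for p using r(4)[OF that] by simp
  have Xim: "X p \<in> psi pr ` {..<16}" if "p \<in> positions" for p
    using bj Xin[OF that] unfolding bij_betw_def by simp
  have psiA: "psi pr (A p) = X p" if "p \<in> positions" for p
  proof -
    have "psi pr (phi (X p)) = X p" unfolding phi_def by (rule f_inv_into_f[OF Xim[OF that]])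
    then show ?thesis using that by (simp add: A_def)
  qed
  have Alt: "A p < 16" if "p \<in> positions" for p
  proof -
    have "phi (X p) \<in> {..<16}" unfolding phi_def by (rule inv_into_into[OF Xim[OF that]])
    then show ?thesis using that by (simp add: A_def)
  qed
  have phipsi: "phi (psi pr k) = k" if "k < 16" for k
    unfolding phi_def by (rule inv_into_f_f) (use that bj in \<open>auto simp: bij_betw_def\<close>)
  note pv = psi_vals[of "X(0,0)" "X(0,1) XOR X(0,0)" "X(0,2) XOR X(0,0)" "X(1,0) XOR X(0,0)" "X(2,0) XOR X(0,0)", folded pr_def]
  note h = sq_03[OF sq]
  have row0: "psi pr j = X(0,j)" if "j < 4" for j
  proof -
    have "j = 0 \<or> j = 1 \<or> j = 2 \<or> j = 3" using that by auto
    then show ?thesis using pv h by (elim disjE; simp add: xor.commute xor.left_commute xor.assoc)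
  qed
  have col0: "psi pr (4*i) = X(i,0)" if "i < 4" for i
  proof -
    have "i = 0 \<or> i = 1 \<or> i = 2 \<or> i = 3" using that by auto
    then show ?thesis using pv h by (elim disjE; simp add: xor.commute xor.left_commute xor.assoc)
  qed
  have sqA: "is_square 4 A"
    unfolding is_square_def
  proof (intro conjI allI ballI impI)
    fix p :: "nat \<times> nat" assume "p \<notin> positions" then show "A p = 0" by (simp add: A_def)
  next
    fix p :: "nat \<times> nat" assume "p \<in> positions" then show "A p < 2^4" using Alt by simp
  next
    fix i :: nat assume i: "i < 4"
    have "lin (X(0,1) XOR X(0,0)) (X(0,2) XOR X(0,0)) (X(1,0) XOR X(0,0)) (X(2,0) XOR X(0,0))
        (xor (xor (A(i,0)) (A(i,1))) (xor (A(i,2)) (A(i,3)))) = 0"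
      using psi_quad[of "X(0,0)" "X(0,1) XOR X(0,0)" "X(0,2) XOR X(0,0)" "X(1,0) XOR X(0,0)" "X(2,0) XOR X(0,0)" "A(i,0)" "A(i,1)" "A(i,2)" "A(i,3)", folded pr_def] i r(1)[OF i]
      by (simp add: psiA)
    moreover have "xor (xor (A(i,0)) (A(i,1))) (xor (A(i,2)) (A(i,3))) < 16"
      using i by (intro xor_lt16 Alt; simp)
    ultimately show "xor (xor (A(i,0)) (A(i,1))) (xor (A(i,2)) (A(i,3))) = 0"
      using ind unfolding indep_def by blast
  next
    fix j :: nat assume j: "j < 4"
    have "lin (X(0,1) XOR X(0,0)) (X(0,2) XOR X(0,0)) (X(1,0) XOR X(0,0)) (X(2,0) XOR X(0,0))
        (xor (xor (A(0,j)) (A(1,j))) (xor (A(2,j)) (A(3,j)))) = 0"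
      using psi_quad[of "X(0,0)" "X(0,1) XOR X(0,0)" "X(0,2) XOR X(0,0)" "X(1,0) XOR X(0,0)" "X(2,0) XOR X(0,0)" "A(0,j)" "A(1,j)" "A(2,j)" "A(3,j)", folded pr_def] j r(2)[OF j]
      by (simp add: psiA)
    moreover have "xor (xor (A(0,j)) (A(1,j))) (xor (A(2,j)) (A(3,j))) < 16"
      using j by (intro xor_lt16 Alt; simp)
    ultimately show "xor (xor (A(0,j)) (A(1,j))) (xor (A(2,j)) (A(3,j))) = 0"
      using ind unfolding indep_def by blast
  qed
  have nA: "normA A" unfolding normA_def
  proof (intro conjI allI impI)
    fix j :: nat assume j: "j < 4"
    then have "A(0,j) = phi (psi pr j)" using row0[OF j] by (simp add: A_def)
    then show "A(0,j) = j" using phipsi j by simp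
  next
    fix i :: nat assume i: "i < 4"
    then have "A(i,0) = phi (psi pr (4*i))" using col0[OF i] by (simp add: A_def)
    then show "A(i,0) = 4*i" using phipsi i by simp
  qed
  have cA: "cmpt B A" unfolding cmpt_def
  proof (intro ballI impI)
    fix p q assume p: "p \<in> positions" and q: "q \<in> positions" and b: "B p = B q" and e: "A p = A q"
    then have "X p = X q" using psiA[OF p] psiA[OF q] by metis
    then show "p = q" using cX p q b unfolding cmpt_def by blast
  qed
  have AS: "A \<in> SB B" using sqA nA cA unfolding SB_def by blast
  have "X = Phi pr A"
  proof
    fix p show "X p = Phi pr A p"
      by (cases "p \<in> positions") (simp_all add: Phi_def psiA r(3))
  qed
  then show ?thesis using prP AS by force
qed

lemma Phi_bij: "typeB n B \<Longrightarrow> bij_betw (\<lambda>(pr,A). Phi pr A) (Pset \<times> SB B) (CB B)"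
  unfolding bij_betw_def using Phi_inj Phi_in Phi_onto by (auto simp del: pos_simp)


interpretation xs: comm_monoid_set "xor :: nat \<Rightarrow> nat \<Rightarrow> nat" 0 ..

lemma set04: "{0..<4::nat} = {0,1,2,3}" by auto

lemma perm4:
  fixes f :: "nat \<Rightarrow> nat" and \<tau> :: "nat \<Rightarrow> nat"
  assumes "bij_betw \<tau> {0..<4} {0..<4}"
  shows "xor (xor (f (\<tau> 0)) (f (\<tau> 1))) (xor (f (\<tau> 2)) (f (\<tau> 3))) = xor (xor (f 0) (f 1)) (xor (f 2) (f (3::nat)))"
proof -
  have inj: "inj_on \<tau> {0..<4}" and img: "\<tau> ` {0..<4} = {0..<4}" using assms unfolding bij_betw_def by auto
  have "xs.F f (\<tau> ` {0..<4}) = xs.F (f \<circ> \<tau>) {0..<4}"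
    using inj by (rule xs.reindex)
  then have "xs.F f {0..<4} = xs.F (f \<circ> \<tau>) {0..<4}" unfolding img .
  then show ?thesis unfolding set04 by (simp add: xor.assoc)
qed

definition tmap :: "(nat \<times> nat \<Rightarrow> nat) \<Rightarrow> (nat \<times> nat \<Rightarrow> nat \<times> nat) \<Rightarrow> (nat \<times> nat \<Rightarrow> nat)" where
  "tmap X t = (\<lambda>p. if p \<in> positions then X (t p) else 0)"

lemma bij4_lt: "bij_betw \<sigma> {0..<4::nat} {0..<4::nat} \<Longrightarrow> (i::nat) < 4 \<Longrightarrow> \<sigma> i < (4::nat)"
  unfolding bij_betw_def by auto

lemma pos_map_pos:
  assumes "bij_betw \<sigma> {0..<4} {0..<4}" "bij_betw \<tau> {0..<4} {0..<4}" "p \<in> positions"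
  shows "pos_map r \<sigma> \<tau> p \<in> positions"
  using assms bij4_lt[OF assms(1)] bij4_lt[OF assms(2)] unfolding pos_map_def
  by (cases p) auto

lemma tmap_square:
  assumes sq: "is_square 4 X" and s: "bij_betw \<sigma> {0..<4} {0..<4}" and t: "bij_betw \<tau> {0..<4} {0..<4}"
  shows "is_square 4 (tmap X (pos_map r \<sigma> \<tau>))"
  unfolding is_square_def
proof (intro conjI allI ballI impI)
  note r = sq_rows[OF sq]
  fix p :: "nat \<times> nat" assume "p \<notin> positions" then show "tmap X (pos_map r \<sigma> \<tau>) p = 0" by (simp add: tmap_def)
next
  note r = sq_rows[OF sq]
  fix p :: "nat \<times> nat" assume p: "p \<in> positions"
  then show "tmap X (pos_map r \<sigma> \<tau>) p < 2^4" using r(4)[OF pos_map_pos[OF s t p]] by (simp add: tmap_def)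
next
  note r = sq_rows[OF sq]
  fix i :: nat assume i: "i < 4"
  show "xor (xor (tmap X (pos_map r \<sigma> \<tau>) (i,0)) (tmap X (pos_map r \<sigma> \<tau>) (i,1)))
          (xor (tmap X (pos_map r \<sigma> \<tau>) (i,2)) (tmap X (pos_map r \<sigma> \<tau>) (i,3))) = 0"
  proof (cases r)
    case True
    have "xor (xor (X (\<tau> 0, \<sigma> i)) (X (\<tau> 1, \<sigma> i))) (xor (X (\<tau> 2, \<sigma> i)) (X (\<tau> 3, \<sigma> i))) = 0"
      using perm4[OF t, of "\<lambda>j. X (j, \<sigma> i)"] r(2)[OF bij4_lt[OF s i]] by simp
    then show ?thesis using True i by (simp add: tmap_def pos_map_def)
  next
    case False
    have "xor (xor (X (\<sigma> i, \<tau> 0)) (X (\<sigma> i, \<tau> 1))) (xor (X (\<sigma> i, \<tau> 2)) (X (\<sigma> i, \<tau> 3))) = 0"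
      using perm4[OF t, of "\<lambda>j. X (\<sigma> i, j)"] r(1)[OF bij4_lt[OF s i]] by simp
    then show ?thesis using False i by (simp add: tmap_def pos_map_def)
  qed
next
  note r = sq_rows[OF sq]
  fix j :: nat assume j: "j < 4"
  show "xor (xor (tmap X (pos_map r \<sigma> \<tau>) (0,j)) (tmap X (pos_map r \<sigma> \<tau>) (1,j)))
          (xor (tmap X (pos_map r \<sigma> \<tau>) (2,j)) (tmap X (pos_map r \<sigma> \<tau>) (3,j))) = 0"
  proof (cases r)
    case True
    have "xor (xor (X (\<tau> j, \<sigma> 0)) (X (\<tau> j, \<sigma> 1))) (xor (X (\<tau> j, \<sigma> 2)) (X (\<tau> j, \<sigma> 3))) = 0"
      using perm4[OF s, of "\<lambda>i. X (\<tau> j, i)"] r(1)[OF bij4_lt[OF t j]] by simp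
    then show ?thesis using True j by (simp add: tmap_def pos_map_def)
  next
    case False
    have "xor (xor (X (\<sigma> 0, \<tau> j)) (X (\<sigma> 1, \<tau> j))) (xor (X (\<sigma> 2, \<tau> j)) (X (\<sigma> 3, \<tau> j))) = 0"
      using perm4[OF s, of "\<lambda>i. X (i, \<tau> j)"] r(2)[OF bij4_lt[OF t j]] by simp
    then show ?thesis using False j by (simp add: tmap_def pos_map_def)
  qed
qed


lemma card_CB_eq:
  assumes s: "bij_betw \<sigma> {0..<4} {0..<4}" and t: "bij_betw \<tau> {0..<4} {0..<4}"
    and pat: "\<forall>p\<in>positions. \<forall>q\<in>positions.
           (B1 p = B1 q) \<longleftrightarrow> (B2 (pos_map r \<sigma> \<tau> p) = B2 (pos_map r \<sigma> \<tau> q))"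
  shows "card (CB B1) = card (CB B2)"
proof -
  define T where "T = pos_map r \<sigma> \<tau>"
  define \<sigma>' where "\<sigma>' = inv_into {0..<4} \<sigma>"
  define \<tau>' where "\<tau>' = inv_into {0..<4} \<tau>"
  have s': "bij_betw \<sigma>' {0..<4} {0..<4}" unfolding \<sigma>'_def by (rule bij_betw_inv_into[OF s])
  have t': "bij_betw \<tau>' {0..<4} {0..<4}" unfolding \<tau>'_def by (rule bij_betw_inv_into[OF t])
  define T' where "T' = (if r then pos_map True \<tau>' \<sigma>' else pos_map False \<sigma>' \<tau>')"
  have TP: "T p \<in> positions" if "p \<in> positions" for p unfolding T_def by (rule pos_map_pos[OF s t that])
  have T'P: "T' p \<in> positions" if "p \<in> positions" for p
    unfolding T'_def using pos_map_pos[OF s' t' that] pos_map_pos[OF t' s' that] by simp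
  have ss: "\<sigma>' (\<sigma> i) = i" "\<sigma> (\<sigma>' i) = i" "\<tau>' (\<tau> i) = i" "\<tau> (\<tau>' i) = i" if "i < 4" for i
    using that s t unfolding \<sigma>'_def \<tau>'_def bij_betw_def
    by (auto simp: inv_into_f_f f_inv_into_f)
  have TT': "T (T' p) = p" if "p \<in> positions" for p
    using that ss unfolding T_def T'_def pos_map_def by (cases p) auto
  have T'T: "T' (T p) = p" if "p \<in> positions" for p
    using that ss unfolding T_def T'_def pos_map_def by (cases p) auto
  have sqT: "is_square 4 (tmap X T)" if "is_square 4 X" for X
    unfolding T_def by (rule tmap_square[OF that s t])
  have sqT': "is_square 4 (tmap X T')" if "is_square 4 X" for X
    unfolding T'_def using tmap_square[OF that s' t'] tmap_square[OF that t' s'] by simp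
  have "bij_betw (\<lambda>X. tmap X T) (CB B2) (CB B1)"
    unfolding bij_betw_def
  proof (intro conjI)
    show "inj_on (\<lambda>X. tmap X T) (CB B2)"
    proof (rule inj_onI)
      fix X X' assume X: "X \<in> CB B2" and X': "X' \<in> CB B2" and e: "tmap X T = tmap X' T"
      show "X = X'"
      proof
        fix p show "X p = X' p"
        proof (cases "p \<in> positions")
          case True
          then show ?thesis using fun_cong[OF e, of "T' p"] T'P[OF True] TT'[OF True] by (simp add: tmap_def)
        next
          case False
          have "is_square 4 X" "is_square 4 X'" using X X' unfolding CB_def by auto
          then show ?thesis using sq_rows(3) False by metis
        qed
      qed
    qed
  next
    show "(\<lambda>X. tmap X T) ` CB B2 = CB B1"
    proof
      show "(\<lambda>X. tmap X T) ` CB B2 \<subseteq> CB B1"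
      proof clarify
        fix X assume X: "X \<in> CB B2"
        then have sq: "is_square 4 X" and c: "cmpt B2 X" unfolding CB_def by auto
        have "cmpt B1 (tmap X T)" unfolding cmpt_def
        proof (intro ballI impI)
          fix p q assume p: "p \<in> positions" and q: "q \<in> positions" and b: "B1 p = B1 q" and e: "tmap X T p = tmap X T q"
          have "B2 (T p) = B2 (T q)" using pat p q b unfolding T_def by blast
          moreover have "X (T p) = X (T q)" using e p q by (simp add: tmap_def)
          ultimately have "T p = T q" using c TP[OF p] TP[OF q] unfolding cmpt_def by blast
          then show "p = q" using T'T[OF p] T'T[OF q] by metis
        qed
        then show "tmap X T \<in> CB B1" using sqT[OF sq] unfolding CB_def by blast
      qed
    next
      show "CB B1 \<subseteq> (\<lambda>X. tmap X T) ` CB B2"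
      proof
        fix Y assume Y: "Y \<in> CB B1"
        then have sq: "is_square 4 Y" and c: "cmpt B1 Y" unfolding CB_def by auto
        have "cmpt B2 (tmap Y T')" unfolding cmpt_def
        proof (intro ballI impI)
          fix p q assume p: "p \<in> positions" and q: "q \<in> positions" and b: "B2 p = B2 q" and e: "tmap Y T' p = tmap Y T' q"
          have "B2 (T (T' p)) = B2 (T (T' q))" using b TT'[OF p] TT'[OF q] by simp
          then have "B1 (T' p) = B1 (T' q)" using pat T'P[OF p] T'P[OF q] unfolding T_def by blast
          moreover have "Y (T' p) = Y (T' q)" using e p q by (simp add: tmap_def)
          ultimately have "T' p = T' q" using c T'P[OF p] T'P[OF q] unfolding cmpt_def by blast
          then show "p = q" using TT'[OF p] TT'[OF q] by metis
        qed
        then have inC: "tmap Y T' \<in> CB B2" using sqT'[OF sq] unfolding CB_def by blast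
        have "tmap (tmap Y T') T = Y"
        proof
          fix p show "tmap (tmap Y T') T p = Y p"
            using sq_rows(3)[OF sq, of p] TP[of p] T'T[of p] by (simp add: tmap_def)
        qed
        then show "Y \<in> (\<lambda>X. tmap X T) ` CB B2" using inC by force
      qed
    qed
  qed
  then show ?thesis by (simp add: bij_betw_same_card)
qed

lemma Pset_card: "card Pset > 0"
proof -
  have "Pset \<subseteq> {..<16} \<times> {..<16} \<times> {..<16} \<times> {..<16} \<times> {..<16}" unfolding Pset_def by auto
  then have fin: "finite Pset" by (rule finite_subset) simp
  have "indep 1 2 4 8" unfolding indep_def
  proof (intro allI impI)
    fix k :: nat assume "k < 16" "lin 1 2 4 8 k = 0"
    then show "k = 0" using less16[of k] by (auto simp: lin_def bit_0)
  qed
  then have "(0,1,2,4,8) \<in> Pset" unfolding Pset_def by simp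
  then show ?thesis using fin card_gt_0_iff by blast
qed

theorem mainTheorem5:
  fixes n :: nat and B1 B2 :: "nat \<times> nat \<Rightarrow> nat"
    and \<sigma> \<tau> :: "nat \<Rightarrow> nat" and reflect :: bool
  assumes "n \<ge> 4"
    and "typeB n B1" and "typeB n B2"
    and "bij_betw \<sigma> {0..<4} {0..<4}" and "bij_betw \<tau> {0..<4} {0..<4}"
    and "\<forall>p\<in>positions. \<forall>q\<in>positions.
           (B1 p = B1 q) \<longleftrightarrow> (B2 (pos_map reflect \<sigma> \<tau> p) = B2 (pos_map reflect \<sigma> \<tau> q))"
  shows "num_legit_pairs n B1 = num_legit_pairs n B2"
proof -
  have "{A. legit_pair n B1 A} = SB B1" using legit_iff[OF assms(1,2)] by blast
  then have n1: "num_legit_pairs n B1 = card (SB B1)" unfolding num_legit_pairs_def by simp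
  have "{A. legit_pair n B2 A} = SB B2" using legit_iff[OF assms(1,3)] by blast
  then have n2: "num_legit_pairs n B2 = card (SB B2)" unfolding num_legit_pairs_def by simp
  have c1: "card (CB B1) = card Pset * card (SB B1)"
    using bij_betw_same_card[OF Phi_bij[OF assms(2)]] by (simp add: card_cartesian_product)
  have c2: "card (CB B2) = card Pset * card (SB B2)"
    using bij_betw_same_card[OF Phi_bij[OF assms(3)]] by (simp add: card_cartesian_product)
  have "card (CB B1) = card (CB B2)" by (rule card_CB_eq[OF assms(4,5,6)])
  then have "card Pset * card (SB B1) = card Pset * card (SB B2)" using c1 c2 by simp
  then show ?thesis using n1 n2 Pset_card by simp
qed

end
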